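(* Consider a sequence of finite populations indexed by $n\to\infty$, each satisfying Assumption 1, Assumption 2 and the null hypothesis $H_0:\ T_i(1)=T_i(0)$ for all $i$, and condition on all potential event times. Then $$\sum_{k=1}^{K-1}\xi_{1k}=(n\log n)^{1/2}\,O_{\Pr}(1),$$ where $\xi_{1k}=\frac{D_k(N_k-D_k)}{N_k^2(N_k-1)}\big[N_{1k}(N_k-N_{1k})-\mathbb{E}\{N_{1k}(N_k-N_{1k})\mid\boldsymbol{T}(1),\boldsymbol{T}(0),N_k\}\big]$.
   Context: Unit $i$ ($1\le i\le n$) has potential event times $T_i(1),T_i(0)\ge 0$ (fixed constants), potential censoring times $C_i(1),C_i(0)\in[0,\infty]$, treatment indicator $Z_i\in\{0,1\}$; bold letters denote $n$-vectors. Assumption 1: conditional on all potential event and censoring times, the $Z_i$ are i.i.d. Bernoulli$(p_1)$, $p_1=1-p_0\in(0,1)$. Assumption 2: $(\boldsymbol{C}(1),\boldsymbol{C}(0))$ is independent of $(\boldsymbol{T}(1),\boldsymbol{T}(0))$ and the pairs $(C_i(1),C_i(0))$ are i.i.d. across $i$. Realized: $W_i=\min\{T_i,C_i\}$, $\Delta_i=\mathbb{1}(T_i\le C_i)$ with $T_i=Z_iT_i(1)+(1-Z_i)T_i(0)$, $C_i=Z_iC_i(1)+(1-Z_i)C_i(0)$. Let $t_1<\dots<t_K$ be the distinct values of $\{T_i(0)\}$; $N_{1k}=\sum_iZ_i\mathbb{1}(W_i\ge t_k)$, $N_k=\sum_i\mathbb{1}(W_i\ge t_k)$, $D_k=\sum_i\Delta_i\mathbb{1}(W_i=t_k)$;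 convention $0/0:=0$. $X_n=a_nO_{\Pr}(1)$ means $X_n/a_n$ is bounded in probability as $n\to\infty$; all quantities may depend on $n$. *)

theory Defs
  imports "HOL-Probability.Probability"
begin

text \<open>Coordinate i is (Z_i, (C_i(1), C_i(0))): the Z_i are i.i.d. Bernoulli(p),
  independent of the censoring pairs, which are i.i.d. with law mu.
  Potential event times are fixed constants (we condition on them).\<close>
definition cpop_space ::
  "real \<Rightarrow> (ennreal \<times> ennreal) measure \<Rightarrow> nat \<Rightarrow> (nat \<Rightarrow> bool \<times> (ennreal \<times> ennreal)) measure" where
  "cpop_space p mu n = PiM {..<n} (\<lambda>_. measure_pmf (bernoulli_pmf p) \<Otimes>\<^sub>M mu)"

definition Zr :: "(nat \<Rightarrow> bool \<times> (ennreal \<times> ennreal)) \<Rightarrow> nat \<Rightarrow> bool" where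
  "Zr \<omega> i = fst (\<omega> i)"

definition Tr :: "(nat \<Rightarrow> real) \<Rightarrow> (nat \<Rightarrow> real) \<Rightarrow> (nat \<Rightarrow> bool \<times> (ennreal \<times> ennreal)) \<Rightarrow> nat \<Rightarrow> real" where
  "Tr T1 T0 \<omega> i = (if Zr \<omega> i then T1 i else T0 i)"

definition Cr :: "(nat \<Rightarrow> bool \<times> (ennreal \<times> ennreal)) \<Rightarrow> nat \<Rightarrow> ennreal" where
  "Cr \<omega> i = (if Zr \<omega> i then fst (snd (\<omega> i)) else snd (snd (\<omega> i)))"

definition Wr :: "(nat \<Rightarrow> real) \<Rightarrow> (nat \<Rightarrow> real) \<Rightarrow> (nat \<Rightarrow> bool \<times> (ennreal \<times> ennreal)) \<Rightarrow> nat \<Rightarrow> ennreal" where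
  "Wr T1 T0 \<omega> i = min (ennreal (Tr T1 T0 \<omega> i)) (Cr \<omega> i)"

definition Deltar :: "(nat \<Rightarrow> real) \<Rightarrow> (nat \<Rightarrow> real) \<Rightarrow> (nat \<Rightarrow> bool \<times> (ennreal \<times> ennreal)) \<Rightarrow> nat \<Rightarrow> bool" where
  "Deltar T1 T0 \<omega> i = (ennreal (Tr T1 T0 \<omega> i) \<le> Cr \<omega> i)"

text \<open>Distinct values t_1 < ... < t_K of {T_i(0)}; t_k is (event_times T0 n) ! (k-1).\<close>
definition event_times :: "(nat \<Rightarrow> real) \<Rightarrow> nat \<Rightarrow> real list" where
  "event_times T0 n = sorted_list_of_set (T0 ` {..<n})"

definition N1c :: "nat \<Rightarrow> (nat \<Rightarrow> real) \<Rightarrow> (nat \<Rightarrow> real) \<Rightarrow> real \<Rightarrow> (nat \<Rightarrow> bool \<times> (ennreal \<times> ennreal)) \<Rightarrow> real" where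
  "N1c n T1 T0 t \<omega> = real (card {i\<in>{..<n}. Zr \<omega> i \<and> ennreal t \<le> Wr T1 T0 \<omega> i})"

definition Nc :: "nat \<Rightarrow> (nat \<Rightarrow> real) \<Rightarrow> (nat \<Rightarrow> real) \<Rightarrow> real \<Rightarrow> (nat \<Rightarrow> bool \<times> (ennreal \<times> ennreal)) \<Rightarrow> real" where
  "Nc n T1 T0 t \<omega> = real (card {i\<in>{..<n}. ennreal t \<le> Wr T1 T0 \<omega> i})"

definition Dc :: "nat \<Rightarrow> (nat \<Rightarrow> real) \<Rightarrow> (nat \<Rightarrow> real) \<Rightarrow> real \<Rightarrow> (nat \<Rightarrow> bool \<times> (ennreal \<times> ennreal)) \<Rightarrow> real" where
  "Dc n T1 T0 t \<omega> = real (card {i\<in>{..<n}. Deltar T1 T0 \<omega> i \<and> Wr T1 T0 \<omega> i = ennreal t})"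

text \<open>Elementary conditional expectation of X given a discrete random variable Y:
  E[X | Y](w) = E[X; Y = Y(w)] / P(Y = Y(w)), with 0/0 = 0.\<close>
definition cond_exp_disc :: "'a measure \<Rightarrow> ('a \<Rightarrow> real) \<Rightarrow> ('a \<Rightarrow> 'b) \<Rightarrow> 'a \<Rightarrow> real" where
  "cond_exp_disc M X Y \<omega> =
     (\<integral>x. X x * indicator {y\<in>space M. Y y = Y \<omega>} x \<partial>M) / measure M {y\<in>space M. Y y = Y \<omega>}"

definition xi1 :: "real \<Rightarrow> (ennreal \<times> ennreal) measure \<Rightarrow> nat \<Rightarrow> (nat \<Rightarrow> real) \<Rightarrow> (nat \<Rightarrow> real) \<Rightarrow> real
                   \<Rightarrow> (nat \<Rightarrow> bool \<times> (ennreal \<times> ennreal)) \<Rightarrow> real" where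
  "xi1 p mu n T1 T0 t \<omega> =
     (let D = Dc n T1 T0 t \<omega>; N = Nc n T1 T0 t \<omega>; N1 = N1c n T1 T0 t \<omega> in
      D * (N - D) / (N\<^sup>2 * (N - 1)) *
      (N1 * (N - N1) -
       cond_exp_disc (cpop_space p mu n)
         (\<lambda>w. N1c n T1 T0 t w * (Nc n T1 T0 t w - N1c n T1 T0 t w)) (Nc n T1 T0 t) \<omega>))"

end

theory Submission
  imports Defs
begin


definition Qp :: "real \<Rightarrow> real \<Rightarrow> real \<Rightarrow> (bool \<times> bool) pmf" where
  "Qp p q1 q0 = bind_pmf (bernoulli_pmf p) (\<lambda>z. map_pmf (\<lambda>r. (z,r)) (bernoulli_pmf (if z then q1 else q0)))"

definition Qr :: "real \<Rightarrow> real \<Rightarrow> real \<Rightarrow> (bool \<times> bool) pmf" where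
  "Qr \<rho> \<pi> \<pi>0 = bind_pmf (bernoulli_pmf \<rho>) (\<lambda>r. map_pmf (\<lambda>z. (z,r)) (bernoulli_pmf (if r then \<pi> else \<pi>0)))"

lemma Collect_id_bool: "{x. x} = {True}" "Collect Not = {False}" by auto

lemma pmf_Qp: "p\<in>{0..1} \<Longrightarrow> q1\<in>{0..1} \<Longrightarrow> q0\<in>{0..1} \<Longrightarrow>
  pmf (Qp p q1 q0) (z,r) = (if z then p else 1-p) * (if r then (if z then q1 else q0) else 1 - (if z then q1 else q0))"
  unfolding Qp_def by (simp add: pmf_bind pmf_map vimage_def Collect_id_bool measure_pmf_single)

lemma pmf_Qr: "p\<in>{0..1} \<Longrightarrow> q1\<in>{0..1} \<Longrightarrow> q0\<in>{0..1} \<Longrightarrow>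
  pmf (Qr p q1 q0) (z,r) = (if r then p else 1-p) * (if z then (if r then q1 else q0) else 1 - (if r then q1 else q0))"
  unfolding Qr_def by (simp add: pmf_bind pmf_map vimage_def Collect_id_bool measure_pmf_single)

lemma Qp_eq_Qr:
  assumes p: "p\<in>{0..1}" and q1: "q1\<in>{0..1}" and q0: "q0\<in>{0..1}"
  defines "\<rho> \<equiv> p*q1 + (1-p)*q0"
  defines "\<pi> \<equiv> p*q1 / \<rho>"
  defines "\<pi>0 \<equiv> p*(1-q1) / (1-\<rho>)"
  shows "\<rho>\<in>{0..1}" "\<pi>\<in>{0..1}" "\<pi>0\<in>{0..1}" "Qp p q1 q0 = Qr \<rho> \<pi> \<pi>0"
proof -
  have a: "0 \<le> p*q1" "0 \<le> (1-p)*q0" "0 \<le> p*(1-q1)" "0 \<le> (1-p)*(1-q0)"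
    using p q1 q0 by auto
  have r1: "\<rho> \<le> 1" unfolding \<rho>_def using p q1 q0
    by (smt (verit, best) atLeastAtMost_iff mult_left_le)
  show r: "\<rho>\<in>{0..1}" using a r1 unfolding \<rho>_def by auto
  have "1 - \<rho> = p*(1-q1) + (1-p)*(1-q0)" unfolding \<rho>_def by (simp add: algebra_simps)
  note e1 = this
  show pi: "\<pi>\<in>{0..1}" unfolding \<pi>_def using a \<rho>_def
    by (auto simp: divide_le_eq_1)
  show pi0: "\<pi>0\<in>{0..1}" unfolding \<pi>0_def using a e1
    by (auto simp: divide_le_eq_1)
  have z1: "p*q1 = 0" if "\<rho> = 0" using a that unfolding \<rho>_def by linarith
  have k1: "\<rho> * \<pi> = p*q1" unfolding \<pi>_def using z1 by (cases "\<rho> = 0") auto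
  have k2: "\<rho> * (1-\<pi>) = (1-p)*q0" using k1 \<rho>_def by (simp add: algebra_simps)
  have z3: "p*(1-q1) = 0" if "1-\<rho> = 0" using a that e1 by linarith
  have k3: "(1-\<rho>) * \<pi>0 = p*(1-q1)" unfolding \<pi>0_def using z3 by (cases "1-\<rho> = 0") auto
  have k4: "(1-\<rho>) * (1-\<pi>0) = (1-p)*(1-q0)"
  proof -
    have "(1-\<rho>) * (1-\<pi>0) = (1-\<rho>) - (1-\<rho>)*\<pi>0" by (simp add: algebra_simps)
    also have "\<dots> = (1-\<rho>) - p*(1-q1)" by (simp only: k3)
    also have "\<dots> = (p*(1-q1) + (1-p)*(1-q0)) - p*(1-q1)" by (simp only: e1)
    also have "\<dots> = (1-p)*(1-q0)" by simp
    finally show ?thesis .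
  qed
  show "Qp p q1 q0 = Qr \<rho> \<pi> \<pi>0"
  proof (rule pmf_eqI)
    fix x :: "bool \<times> bool"
    obtain z r where x: "x = (z,r)" by (cases x)
    show "pmf (Qp p q1 q0) x = pmf (Qr \<rho> \<pi> \<pi>0) x"
      unfolding x using k1 k2 k3 k4 
      by (cases z; cases r) (simp_all add: pmf_Qp[OF p q1 q0] pmf_Qr[OF r pi pi0] mult.commute)
  qed
qed




lemma inner_decomp:
  fixes I :: "nat set" and e :: "nat \<Rightarrow> bool" and R :: "nat \<Rightarrow> bool"
  assumes I: "finite I" and pi: "\<pi>\<in>{0..1}"
  defines "S \<equiv> {i\<in>I. e i \<and> R i}"
  shows "map_pmf (\<lambda>y. (card{i\<in>I. e i \<and> snd(y i)}, card{i\<in>I. e i \<and> fst(y i) \<and> snd(y i)}))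
           (Pi_pmf I (False,False) (\<lambda>i. map_pmf (\<lambda>z. (z, R i)) (bernoulli_pmf (if R i then \<pi> else \<pi>0))))
         = map_pmf (Pair (card S)) (binomial_pmf (card S) \<pi>)"
proof -
  define W where "W = Pi_pmf I (False,False) (\<lambda>i. map_pmf (\<lambda>z. (z, R i)) (bernoulli_pmf (if R i then \<pi> else \<pi>0)))"
  have S: "finite S" "S \<subseteq> I" using I unfolding S_def by auto
  have "map_pmf (\<lambda>y. (card{i\<in>I. e i \<and> snd(y i)}, card{i\<in>I. e i \<and> fst(y i) \<and> snd(y i)})) W
      = map_pmf (\<lambda>y. (card S, card{i\<in>S. fst (y i)})) W"
  proof (rule map_pmf_cong[OF refl])
    fix y assume "y \<in> set_pmf W"
    hence "\<forall>i\<in>I. snd (y i) = R i" unfolding W_def set_Pi_pmf[OF I] PiE_dflt_def by auto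
    thus "(card{i\<in>I. e i \<and> snd(y i)}, card{i\<in>I. e i \<and> fst(y i) \<and> snd(y i)}) = (card S, card{i\<in>S. fst (y i)})"
      unfolding S_def by (auto intro!: arg_cong[where f=card])
  qed
  also have "\<dots> = map_pmf (\<lambda>z. (card S, card{i\<in>S. z i})) (map_pmf (\<lambda>y. fst \<circ> y) W)"
    by (simp add: map_pmf_comp)
  also have "map_pmf (\<lambda>y. fst \<circ> y) W = Pi_pmf I False (\<lambda>i. map_pmf fst (map_pmf (\<lambda>z. (z, R i)) (bernoulli_pmf (if R i then \<pi> else \<pi>0))))"
    unfolding W_def by (rule Pi_pmf_map[symmetric]) (auto simp: I)
  also have "\<dots> = Pi_pmf I False (\<lambda>i. bernoulli_pmf (if R i then \<pi> else \<pi>0))"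
    by (simp add: map_pmf_comp)
  also have "map_pmf (\<lambda>z. (card S, card{i\<in>S. z i})) \<dots>
      = map_pmf (\<lambda>z. (card S, card{i\<in>S. z i})) (Pi_pmf S False (\<lambda>i. bernoulli_pmf (if R i then \<pi> else \<pi>0)))"
  proof -
    have ceq: "\<And>x. {i. (i \<in> S \<longrightarrow> x i) \<and> i \<in> S} = {i\<in>S. x i}" by auto
    show ?thesis by (subst Pi_pmf_subset[OF I S(2)]) (simp add: map_pmf_comp ceq)
  qed
  also have "Pi_pmf S False (\<lambda>i. bernoulli_pmf (if R i then \<pi> else \<pi>0)) = Pi_pmf S False (\<lambda>_. bernoulli_pmf \<pi>)"
    by (rule Pi_pmf_cong) (auto simp: S_def)
  also have "map_pmf (\<lambda>z. (card S, card{i\<in>S. z i})) \<dots> = map_pmf (Pair (card S)) (map_pmf (\<lambda>f. card{x\<in>S. f x}) (Pi_pmf S False (\<lambda>_. bernoulli_pmf \<pi>)))"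
    by (simp add: map_pmf_comp)
  also have "map_pmf (\<lambda>f. card{x\<in>S. f x}) (Pi_pmf S False (\<lambda>_. bernoulli_pmf \<pi>)) = binomial_pmf (card S) \<pi>"
    by (rule binomial_pmf_altdef'[symmetric]) (use S pi in auto)
  finally show ?thesis unfolding W_def .
qed

lemma pmf_decomp:
  fixes I :: "nat set" and e :: "nat \<Rightarrow> bool"
  assumes I: "finite I" and pi: "\<pi>\<in>{0..1}"
  shows "map_pmf (\<lambda>y. (card{i\<in>I. e i \<and> snd(y i)}, card{i\<in>I. e i \<and> fst(y i) \<and> snd(y i)}))
           (Pi_pmf I (False,False) (\<lambda>_. Qr \<rho> \<pi> \<pi>0))
        = bind_pmf (map_pmf (\<lambda>R. card {i\<in>I. e i \<and> R i}) (Pi_pmf I False (\<lambda>_. bernoulli_pmf \<rho>)))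
             (\<lambda>m. map_pmf (Pair m) (binomial_pmf m \<pi>))"
proof -
  have "Pi_pmf I (False,False) (\<lambda>_. Qr \<rho> \<pi> \<pi>0) = bind_pmf (Pi_pmf I False (\<lambda>_. bernoulli_pmf \<rho>))
     (\<lambda>R. Pi_pmf I (False,False) (\<lambda>i. map_pmf (\<lambda>z. (z, R i)) (bernoulli_pmf (if R i then \<pi> else \<pi>0))))"
    unfolding Qr_def by (rule Pi_pmf_bind[OF I])
  thus ?thesis
    by (simp add: map_bind_pmf bind_map_pmf inner_decomp[OF I pi])
qed




definition gmap :: "real \<Rightarrow> bool \<times> (ennreal \<times> ennreal) \<Rightarrow> bool \<times> bool" where
  "gmap t x = (fst x, ennreal t \<le> (if fst x then fst (snd x) else snd (snd x)))"

lemma borel_set_le_fst: "{c::ennreal\<times>ennreal. a \<le> fst c} \<in> sets borel"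
  by (rule borel_closed, rule closed_Collect_le) (auto intro: continuous_intros)

lemma borel_set_le_snd: "{c::ennreal\<times>ennreal. a \<le> snd c} \<in> sets borel"
  by (rule borel_closed, rule closed_Collect_le) (auto intro: continuous_intros)

lemma borel_set_gm: "{c::ennreal\<times>ennreal. (a \<le> (if z then fst c else snd c)) = r} \<in> sets borel"
proof -
  have "{c::ennreal\<times>ennreal. (a \<le> (if z then fst c else snd c)) = r} =
     (if r then (if z then {c. a \<le> fst c} else {c. a \<le> snd c}) else UNIV - (if z then {c. a \<le> fst c} else {c. a \<le> snd c}))"
    by auto
  thus ?thesis using borel_set_le_fst borel_set_le_snd
    by (auto intro!: sets.compl_sets simp del: space_borel simp add: space_borel[symmetric])
qed

lemma gmap_measurable:
  assumes "sets mu = sets borel"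
  shows "gmap t \<in> measurable (measure_pmf (bernoulli_pmf p) \<Otimes>\<^sub>M mu) (count_space UNIV)"
proof (subst measurable_count_space_eq2_countable, safe)
  fix z r :: bool
  have sp: "space mu = UNIV" using sets_eq_imp_space_eq[OF assms] by simp
  have "gmap t -` {(z, r)} \<inter> space (measure_pmf (bernoulli_pmf p) \<Otimes>\<^sub>M mu) =
        {z} \<times> {c. (ennreal t \<le> (if z then fst c else snd c)) = r}"
    by (auto simp: gmap_def space_pair_measure sp)
  also have "\<dots> \<in> sets (measure_pmf (bernoulli_pmf p) \<Otimes>\<^sub>M mu)"
    by (rule pair_measureI) (auto simp: assms borel_set_gm)
  finally show "gmap t -` {(z, r)} \<inter> space (measure_pmf (bernoulli_pmf p) \<Otimes>\<^sub>M mu)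
      \<in> sets (measure_pmf (bernoulli_pmf p) \<Otimes>\<^sub>M mu)" .
qed simp

lemma distr_gmap:
  fixes t :: real
  assumes mu: "prob_space mu" and sets: "sets mu = sets borel" and p: "p\<in>{0..1}"
  defines "q1 \<equiv> measure mu {c. ennreal t \<le> fst c}"
  defines "q0 \<equiv> measure mu {c. ennreal t \<le> snd c}"
  shows "distr (measure_pmf (bernoulli_pmf p) \<Otimes>\<^sub>M mu) (count_space UNIV) (gmap t) = measure_pmf (Qp p q1 q0)"
    "q1 \<in> {0..1}" "q0 \<in> {0..1}"
proof -
  interpret mu: prob_space mu by (rule mu)
  have sp: "space mu = UNIV" using sets_eq_imp_space_eq[OF sets] by simp
  show q1: "q1 \<in> {0..1}" unfolding q1_def by auto
  show q0: "q0 \<in> {0..1}" unfolding q0_def by auto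
  show "distr (measure_pmf (bernoulli_pmf p) \<Otimes>\<^sub>M mu) (count_space UNIV) (gmap t) = measure_pmf (Qp p q1 q0)"
  proof (rule measure_eqI_countable[where A=UNIV])
    fix a :: "bool \<times> bool"
    obtain z r where a: "a = (z,r)" by (cases a)
    have ms: "{c. (ennreal t \<le> (if z then fst c else snd c)) = r} \<in> sets mu"
      by (simp add: sets borel_set_gm)
    have pre: "gmap t -` {(z, r)} \<inter> space (measure_pmf (bernoulli_pmf p) \<Otimes>\<^sub>M mu) =
        {z} \<times> {c. (ennreal t \<le> (if z then fst c else snd c)) = r}"
      by (auto simp: gmap_def space_pair_measure sp)
    have "emeasure (distr (measure_pmf (bernoulli_pmf p) \<Otimes>\<^sub>M mu) (count_space UNIV) (gmap t)) {a}
        = emeasure (measure_pmf (bernoulli_pmf p) \<Otimes>\<^sub>M mu) ({z} \<times> {c. (ennreal t \<le> (if z then fst c else snd c)) = r})"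
      unfolding a by (subst emeasure_distr) (auto simp: gmap_measurable[OF sets] pre)
    also have "\<dots> = emeasure (measure_pmf (bernoulli_pmf p)) {z} * emeasure mu {c. (ennreal t \<le> (if z then fst c else snd c)) = r}"
      by (rule mu.emeasure_pair_measure_Times) (auto simp: ms)
    also have "\<dots> = ennreal (pmf (bernoulli_pmf p) z * measure mu {c. (ennreal t \<le> (if z then fst c else snd c)) = r})"
      by (simp add: emeasure_pmf_single mu.emeasure_eq_measure ennreal_mult')
    also have "measure mu {c. (ennreal t \<le> (if z then fst c else snd c)) = r} = (if r then (if z then q1 else q0) else 1 - (if z then q1 else q0))"
    proof -
      have e1: "{c. ennreal t \<le> fst c} \<in> sets mu" "{c. ennreal t \<le> snd c} \<in> sets mu"
        by (simp_all add: sets borel_set_le_fst borel_set_le_snd)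
      have "{c. (ennreal t \<le> (if z then fst c else snd c)) = r} =
        (if r then (if z then {c. ennreal t \<le> fst c} else {c. ennreal t \<le> snd c}) else space mu - (if z then {c. ennreal t \<le> fst c} else {c. ennreal t \<le> snd c}))"
        by (auto simp: sp)
      thus ?thesis using e1 by (auto simp: q1_def q0_def mu.prob_compl)
    qed
    also have "ennreal (pmf (bernoulli_pmf p) z * (if r then (if z then q1 else q0) else 1 - (if z then q1 else q0)))
        = emeasure (measure_pmf (Qp p q1 q0)) {a}"
      unfolding a emeasure_pmf_single pmf_Qp[OF p q1 q0] using p by (cases z) auto
    finally show "emeasure (distr (measure_pmf (bernoulli_pmf p) \<Otimes>\<^sub>M mu) (count_space UNIV) (gmap t)) {a}
        = emeasure (measure_pmf (Qp p q1 q0)) {a}" .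
  qed auto
qed




lemma sets_PiM_cnt_all:
  fixes I :: "'i set"
  assumes I: "finite I" and A: "A \<subseteq> space (PiM I (\<lambda>_. count_space (UNIV :: 'a::countable set)))"
  shows "A \<in> sets (PiM I (\<lambda>_. count_space (UNIV :: 'a set)))"
proof -
  have sp: "space (PiM I (\<lambda>_. count_space (UNIV :: 'a set))) = PiE I (\<lambda>_. UNIV)"
    by (simp add: space_PiM)
  have cA: "countable A"
    by (rule countable_subset[OF A]) (simp add: sp countable_PiE I)
  have "A = (\<Union>x\<in>A. PiE I (\<lambda>i. {x i}))"
  proof (intro equalityI subsetI)
    fix y assume "y \<in> A" thus "y \<in> (\<Union>x\<in>A. PiE I (\<lambda>i. {x i}))"
      using A sp by (auto simp: PiE_def)
  next
    fix y assume "y \<in> (\<Union>x\<in>A. PiE I (\<lambda>i. {x i}))"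
    then obtain x where x: "x \<in> A" "y \<in> PiE I (\<lambda>i. {x i})" by auto
    have "x \<in> PiE I (\<lambda>_. UNIV)" using x A sp by auto
    hence "y = x" using x(2) by (auto simp: PiE_def extensional_def fun_eq_iff)
    thus "y \<in> A" using x by simp
  qed
  also have "\<dots> \<in> sets (PiM I (\<lambda>_. count_space (UNIV :: 'a set)))"
    by (rule sets.countable_UN''[OF cA]) (auto intro!: sets_PiM_I_finite I)
  finally show ?thesis .
qed

lemma measurable_PiM_cnt_all:
  fixes I :: "'i set"
  assumes I: "finite I"
  shows "f \<in> measurable (PiM I (\<lambda>_. count_space (UNIV :: 'a::countable set))) (N :: 'b measure)
         \<longleftrightarrow> f \<in> space (PiM I (\<lambda>_. count_space (UNIV :: 'a set))) \<rightarrow> space N"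
  by (auto simp: measurable_def intro!: sets_PiM_cnt_all[OF I])

lemma PiM_pmf_eq:
  assumes I: "finite I"
  shows "distr (measure_pmf (Pi_pmf I d (\<lambda>_. Q))) (PiM I (\<lambda>_. count_space UNIV)) (\<lambda>x. restrict x I)
       = PiM I (\<lambda>_. measure_pmf Q)"
proof (rule product_sigma_finite.PiM_eqI)
  interpret product_prob_space "\<lambda>_. measure_pmf Q"
    by (intro product_prob_spaceI) (simp add: measure_pmf.prob_space_axioms)
  show "product_sigma_finite (\<lambda>_. measure_pmf Q)" by unfold_locales
  show "finite I" by (rule I)
  show "sets (distr (measure_pmf (Pi_pmf I d (\<lambda>_. Q))) (PiM I (\<lambda>_. count_space UNIV)) (\<lambda>x. restrict x I))
      = sets (PiM I (\<lambda>_. measure_pmf Q))"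
    by (simp, intro sets_PiM_cong) simp_all
next
  fix A assume A: "\<And>i. i \<in> I \<Longrightarrow> A i \<in> sets (measure_pmf Q)"
  have "Pi\<^sub>E I A \<in> sets (Pi\<^sub>M I (\<lambda>i. count_space UNIV))"
    using A by (intro sets_PiM_I_finite I) auto
  hence "emeasure (distr (measure_pmf (Pi_pmf I d (\<lambda>_. Q))) (Pi\<^sub>M I (\<lambda>i. count_space UNIV)) (\<lambda>x. restrict x I)) (Pi\<^sub>E I A)
       = emeasure (measure_pmf (Pi_pmf I d (\<lambda>_. Q))) ((\<lambda>x. restrict x I) -` Pi\<^sub>E I A)"
    by (subst emeasure_distr) (auto simp: space_PiM)
  also have "\<dots> = emeasure (measure_pmf (Pi_pmf I d (\<lambda>_. Q))) (PiE_dflt I d A)"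
    by (intro emeasure_eq_AE AE_pmfI) (auto simp: PiE_dflt_def set_Pi_pmf I)
  also have "\<dots> = (\<Prod>i\<in>I. emeasure (measure_pmf Q) (A i))"
    by (simp add: measure_pmf.emeasure_eq_measure measure_Pi_pmf_PiE_dflt I prod_ennreal)
  finally show "emeasure (distr (measure_pmf (Pi_pmf I d (\<lambda>_. Q))) (Pi\<^sub>M I (\<lambda>i. count_space UNIV)) (\<lambda>x. restrict x I)) (Pi\<^sub>E I A)
       = (\<Prod>i\<in>I. emeasure (measure_pmf Q) (A i))" .
qed

lemma cpop_distr:
  fixes t :: real
  assumes mu: "prob_space mu" and sets: "sets mu = sets borel" and p: "p\<in>{0..1}"
  defines "q1 \<equiv> measure mu {c. ennreal t \<le> fst c}"
  defines "q0 \<equiv> measure mu {c. ennreal t \<le> snd c}"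
  shows "distr (cpop_space p mu n) (PiM {..<n} (\<lambda>_. count_space UNIV)) (compose {..<n} (gmap t))
       = distr (measure_pmf (Pi_pmf {..<n} (False,False) (\<lambda>_. Qp p q1 q0))) (PiM {..<n} (\<lambda>_. count_space UNIV)) (\<lambda>x. restrict x {..<n})"
    "compose {..<n} (gmap t) \<in> measurable (cpop_space p mu n) (PiM {..<n} (\<lambda>_. count_space UNIV))"
proof -
  have M0: "prob_space (measure_pmf (bernoulli_pmf p) \<Otimes>\<^sub>M mu)"
    by (intro prob_space_pair measure_pmf.prob_space_axioms mu)
  have gm: "gmap t \<in> measurable (measure_pmf (bernoulli_pmf p) \<Otimes>\<^sub>M mu) (count_space UNIV)"
    by (rule gmap_measurable[OF sets])
  have gm': "gmap t \<in> measurable (measure_pmf (bernoulli_pmf p) \<Otimes>\<^sub>M mu) (measure_pmf (Qp p q1 q0))"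
    using gm by (simp add: measurable_cong_sets[OF refl sets_measure_pmf_count_space])
  have "distr (cpop_space p mu n) (PiM {..<n} (\<lambda>_. measure_pmf (Qp p q1 q0))) (compose {..<n} (gmap t))
      = PiM {..<n} (\<lambda>_. distr (measure_pmf (bernoulli_pmf p) \<Otimes>\<^sub>M mu) (measure_pmf (Qp p q1 q0)) (gmap t))"
    unfolding cpop_space_def
    by (rule distr_PiM_finite_prob_space') (auto simp: M0 measure_pmf.prob_space_axioms gm' gm)
  also have "(\<lambda>_. distr (measure_pmf (bernoulli_pmf p) \<Otimes>\<^sub>M mu) (measure_pmf (Qp p q1 q0)) (gmap t))
      = (\<lambda>_. distr (measure_pmf (bernoulli_pmf p) \<Otimes>\<^sub>M mu) (count_space UNIV) (gmap t))"
    by (intro ext distr_cong) auto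
  also have "\<dots> = (\<lambda>_. measure_pmf (Qp p q1 q0))"
    unfolding q1_def q0_def by (intro ext distr_gmap mu sets p)
  also have "PiM {..<n} \<dots> = distr (measure_pmf (Pi_pmf {..<n} (False,False) (\<lambda>_. Qp p q1 q0))) (PiM {..<n} (\<lambda>_. count_space UNIV)) (\<lambda>x. restrict x {..<n})"
    by (rule PiM_pmf_eq[symmetric]) simp
  also have "distr (cpop_space p mu n) (PiM {..<n} (\<lambda>_. measure_pmf (Qp p q1 q0))) (compose {..<n} (gmap t))
     = distr (cpop_space p mu n) (PiM {..<n} (\<lambda>_. count_space UNIV)) (compose {..<n} (gmap t))"
    by (intro distr_cong refl sets_PiM_cong) auto
  finally show "distr (cpop_space p mu n) (PiM {..<n} (\<lambda>_. count_space UNIV)) (compose {..<n} (gmap t))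
       = distr (measure_pmf (Pi_pmf {..<n} (False,False) (\<lambda>_. Qp p q1 q0))) (PiM {..<n} (\<lambda>_. count_space UNIV)) (\<lambda>x. restrict x {..<n})" .
  show "compose {..<n} (gmap t) \<in> measurable (cpop_space p mu n) (PiM {..<n} (\<lambda>_. count_space UNIV))"
    unfolding cpop_space_def compose_def using gm by measurable
qed




lemma integral_bind_pmf_fin:
  fixes f :: "'b \<Rightarrow> real"
  assumes M: "finite (set_pmf M)" and N: "\<And>x. x \<in> set_pmf M \<Longrightarrow> finite (set_pmf (N x))"
  shows "(\<integral>y. f y \<partial>measure_pmf (bind_pmf M N)) = (\<integral>x. (\<integral>y. f y \<partial>measure_pmf (N x)) \<partial>measure_pmf M)"
proof -
  define B where "B = (\<Union>x\<in>set_pmf M. set_pmf (N x))"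
  have B: "finite B" unfolding B_def using M N by auto
  have "(\<integral>y. f y \<partial>measure_pmf (bind_pmf M N)) = (\<Sum>y\<in>B. f y * pmf (bind_pmf M N) y)"
    by (rule integral_measure_pmf_real[OF B]) (auto simp: B_def)
  also have "\<dots> = (\<Sum>y\<in>B. f y * (\<Sum>x\<in>set_pmf M. pmf (N x) y * pmf M x))"
  proof (intro sum.cong refl arg_cong2[where f="(*)"])
    fix y
    show "pmf (bind_pmf M N) y = (\<Sum>x\<in>set_pmf M. pmf (N x) y * pmf M x)"
      unfolding pmf_bind by (rule integral_measure_pmf_real[OF M]) auto
  qed
  also have "\<dots> = (\<Sum>x\<in>set_pmf M. (\<Sum>y\<in>B. f y * pmf (N x) y) * pmf M x)"
    by (simp add: sum_distrib_left sum_distrib_right mult.assoc mult.left_commute sum.swap[of _ B])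
  also have "\<dots> = (\<Sum>x\<in>set_pmf M. (\<integral>y. f y \<partial>measure_pmf (N x)) * pmf M x)"
  proof (intro sum.cong refl arg_cong2[where f="(*)"])
    fix x assume x: "x \<in> set_pmf M"
    show "(\<Sum>y\<in>B. f y * pmf (N x) y) = (\<integral>y. f y \<partial>measure_pmf (N x))"
      by (rule integral_measure_pmf_real[OF B, symmetric]) (use x in \<open>auto simp: B_def\<close>)
  qed
  also have "\<dots> = (\<integral>x. (\<integral>y. f y \<partial>measure_pmf (N x)) \<partial>measure_pmf M)"
    by (rule integral_measure_pmf_real[OF M, symmetric]) auto
  finally show ?thesis .
qed

locale Jstruct =
  fixes Mp :: "nat pmf" and \<pi> :: real
  assumes Mp_fin: "finite (set_pmf Mp)" and pi: "\<pi> \<in> {0..1}"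
begin

definition J :: "(nat \<times> nat) pmf" where
  "J = bind_pmf Mp (\<lambda>m. map_pmf (Pair m) (binomial_pmf m \<pi>))"

lemma J_integral:
  fixes f :: "nat \<times> nat \<Rightarrow> real"
  shows "(\<integral>x. f x \<partial>measure_pmf J) = (\<integral>m. (\<integral>k. f (m,k) \<partial>measure_pmf (binomial_pmf m \<pi>)) \<partial>measure_pmf Mp)"
  unfolding J_def
  by (subst integral_bind_pmf_fin) (use pi in \<open>auto simp: Mp_fin integral_map_pmf intro!: finite_imageI finite_set_pmf_binomial_pmf\<close>)

lemma J_prob: "measure_pmf.prob J S = (\<integral>m. measure_pmf.prob (binomial_pmf m \<pi>) {k. (m,k)\<in>S} \<partial>measure_pmf Mp)"
proof -
  have "measure_pmf.prob J S = (\<integral>x. indicator S x \<partial>measure_pmf J)" by simp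
  also have "\<dots> = (\<integral>m. (\<integral>k. indicator S (m,k) \<partial>measure_pmf (binomial_pmf m \<pi>)) \<partial>measure_pmf Mp)"
    by (rule J_integral)
  also have "\<dots> = (\<integral>m. measure_pmf.prob (binomial_pmf m \<pi>) {k. (m,k)\<in>S} \<partial>measure_pmf Mp)"
  proof (rule Bochner_Integration.integral_cong[OF refl])
    fix m
    have "(\<lambda>k. indicator S (m,k) :: real) = indicator {k. (m,k)\<in>S}" by (auto simp: indicator_def)
    thus "(\<integral>k. indicator S (m,k) \<partial>measure_pmf (binomial_pmf m \<pi>)) = measure_pmf.prob (binomial_pmf m \<pi>) {k. (m,k)\<in>S}"
      by simp
  qed
  finally show ?thesis .
qed

lemma J1: "measure_pmf.prob J {x. fst x = m} = pmf Mp m"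
proof -
  have "measure_pmf.prob J {x. fst x = m} = (\<integral>m'. indicator {m} m' \<partial>measure_pmf Mp)"
    unfolding J_prob by (intro Bochner_Integration.integral_cong) (auto simp: indicator_def)
  also have "\<dots> = pmf Mp m" by (simp add: measure_pmf_single)
  finally show ?thesis .
qed

lemma J4: "measure_pmf.prob J {x. pmf Mp (fst x) = 0} = 0"
proof -
  have "measure_pmf.prob J {x. pmf Mp (fst x) = 0} = (\<integral>m'. indicator {m. pmf Mp m = 0} m' \<partial>measure_pmf Mp)"
    unfolding J_prob by (intro Bochner_Integration.integral_cong) (auto simp: indicator_def)
  also have "\<dots> = measure_pmf.prob Mp {m. pmf Mp m = 0}" by simp
  also have "\<dots> = 0" by (auto simp: measure_pmf_zero_iff set_pmf_eq)
  finally show ?thesis .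
qed

lemma J2:
  fixes f :: "nat \<Rightarrow> real"
  shows "(\<integral>x. (if fst x = m then f (snd x) else 0) \<partial>measure_pmf J)
   = pmf Mp m * (\<integral>k. f k \<partial>measure_pmf (binomial_pmf m \<pi>))"
proof -
  have "(\<integral>x. (if fst x = m then f (snd x) else 0) \<partial>measure_pmf J)
     = (\<integral>m'. indicator {m} m' * (\<integral>k. f k \<partial>measure_pmf (binomial_pmf m \<pi>)) \<partial>measure_pmf Mp)"
    unfolding J_integral by (intro Bochner_Integration.integral_cong) (auto simp: indicator_def)
  also have "\<dots> = pmf Mp m * (\<integral>k. f k \<partial>measure_pmf (binomial_pmf m \<pi>))"
    by (simp add: measure_pmf_single)
  finally show ?thesis .
qed

lemma J3:
  assumes L: "L \<ge> 0"
  shows "measure_pmf.prob J {x. \<bar>real (snd x) - \<pi> * real (fst x)\<bar> > sqrt (real (fst x) * L)} \<le> 2 * exp (-2 * L)"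
proof -
  have "measure_pmf.prob J {x. \<bar>real (snd x) - \<pi> * real (fst x)\<bar> > sqrt (real (fst x) * L)}
    = (\<integral>m. measure_pmf.prob (binomial_pmf m \<pi>) {k. \<bar>real k - \<pi> * real m\<bar> > sqrt (real m * L)} \<partial>measure_pmf Mp)"
    unfolding J_prob by simp
  also have "\<dots> \<le> (\<integral>m. 2 * exp (-2 * L) \<partial>measure_pmf Mp)"
  proof (rule integral_mono)
    show "integrable (measure_pmf Mp) (\<lambda>m. measure_pmf.prob (binomial_pmf m \<pi>) {k. \<bar>real k - \<pi> * real m\<bar> > sqrt (real m * L)})"
      by (rule integrable_measure_pmf_finite[OF Mp_fin])
    show "integrable (measure_pmf Mp) (\<lambda>m. 2 * exp (-2 * L))" by simp
    fix m :: nat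
    show "measure_pmf.prob (binomial_pmf m \<pi>) {k. \<bar>real k - \<pi> * real m\<bar> > sqrt (real m * L)} \<le> 2 * exp (-2 * L)"
    proof (cases "m = 0")
      case True
      have "{k. \<bar>real k - \<pi> * real m\<bar> > sqrt (real m * L)} \<inter> set_pmf (binomial_pmf m \<pi>) = {}"
        using True pi by (auto simp: set_pmf_binomial_eq split: if_splits)
      hence "measure_pmf.prob (binomial_pmf m \<pi>) {k. \<bar>real k - \<pi> * real m\<bar> > sqrt (real m * L)} = 0"
        by (simp add: measure_pmf_zero_iff Int_commute)
      thus ?thesis by simp
    next
      case False
      interpret B: binomial_distribution m \<pi> by unfold_locales (rule pi)
      have "measure_pmf.prob (binomial_pmf m \<pi>) {k. \<bar>real k - \<pi> * real m\<bar> > sqrt (real m * L)}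
          \<le> measure_pmf.prob (binomial_pmf m \<pi>) {k. \<bar>real k - real m * \<pi>\<bar> \<ge> sqrt (real m * L)}"
        by (intro measure_pmf.finite_measure_mono) (auto simp: mult.commute)
      also have "\<dots> \<le> 2 * exp (-2 * (sqrt (real m * L))\<^sup>2 / real m)"
        using B.prob_abs_ge[of "sqrt (real m * L)"] False L by simp
      also have "(sqrt (real m * L))\<^sup>2 = real m * L" using L by simp
      also have "-2 * (real m * L) / real m = -2 * L" using False by simp
      finally show ?thesis .
    qed
  qed
  also have "\<dots> = 2 * exp (-2 * L)" by simp
  finally show ?thesis .
qed

end




definition HH :: "nat set \<Rightarrow> (nat \<Rightarrow> bool) \<Rightarrow> (nat \<Rightarrow> bool \<times> bool) \<Rightarrow> nat \<times> nat" where
  "HH I e y = (card{i\<in>I. e i \<and> snd(y i)}, card{i\<in>I. e i \<and> fst(y i) \<and> snd(y i)})"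

lemma HH_restrict: "HH I e (restrict y I) = HH I e y"
proof -
  have "{i\<in>I. e i \<and> snd(restrict y I i)} = {i\<in>I. e i \<and> snd(y i)}" by auto
  moreover have "{i\<in>I. e i \<and> fst(restrict y I i) \<and> snd(restrict y I i)} = {i\<in>I. e i \<and> fst(y i) \<and> snd(y i)}" by auto
  ultimately show ?thesis unfolding HH_def by simp
qed

lemma Nc_HH:
  assumes H: "\<forall>i<n. T1 i = T0 i"
  shows "Nc n T1 T0 t \<omega> = real (fst (HH {..<n} (\<lambda>i. ennreal t \<le> ennreal (T0 i)) (compose {..<n} (gmap t) \<omega>)))"
    "N1c n T1 T0 t \<omega> = real (snd (HH {..<n} (\<lambda>i. ennreal t \<le> ennreal (T0 i)) (compose {..<n} (gmap t) \<omega>)))"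
proof -
  have "{i\<in>{..<n}. ennreal t \<le> Wr T1 T0 \<omega> i} = {i\<in>{..<n}. ennreal t \<le> ennreal (T0 i) \<and> snd (compose {..<n} (gmap t) \<omega> i)}"
    using H by (auto simp: Wr_def Tr_def Cr_def Zr_def compose_def gmap_def)
  thus "Nc n T1 T0 t \<omega> = real (fst (HH {..<n} (\<lambda>i. ennreal t \<le> ennreal (T0 i)) (compose {..<n} (gmap t) \<omega>)))"
    unfolding Nc_def HH_def by simp
  have "{i\<in>{..<n}. Zr \<omega> i \<and> ennreal t \<le> Wr T1 T0 \<omega> i} = {i\<in>{..<n}. ennreal t \<le> ennreal (T0 i) \<and> fst (compose {..<n} (gmap t) \<omega> i) \<and> snd (compose {..<n} (gmap t) \<omega> i)}"
    using H by (auto simp: Wr_def Tr_def Cr_def Zr_def compose_def gmap_def)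
  thus "N1c n T1 T0 t \<omega> = real (snd (HH {..<n} (\<lambda>i. ennreal t \<le> ennreal (T0 i)) (compose {..<n} (gmap t) \<omega>)))"
    unfolding N1c_def HH_def by simp
qed

lemma key_t:
  fixes t :: real and T1 T0 :: "nat \<Rightarrow> real"
  assumes mu: "prob_space mu" and sets: "sets mu = sets borel" and p: "p\<in>{0..1}"
    and H: "\<forall>i<n. T1 i = T0 i"
  shows "\<exists>Mp \<pi>. Jstruct Mp \<pi> \<and>
     (\<forall>P. {\<omega>\<in>space (cpop_space p mu n). P (Nc n T1 T0 t \<omega>) (N1c n T1 T0 t \<omega>)} \<in> sets (cpop_space p mu n)) \<and>
     (\<forall>P. measure (cpop_space p mu n) {\<omega>\<in>space (cpop_space p mu n). P (Nc n T1 T0 t \<omega>) (N1c n T1 T0 t \<omega>)}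
          = measure_pmf.prob (Jstruct.J Mp \<pi>) {x. P (real (fst x)) (real (snd x))}) \<and>
     (\<forall>f::real\<Rightarrow>real\<Rightarrow>real. (\<integral>\<omega>. f (Nc n T1 T0 t \<omega>) (N1c n T1 T0 t \<omega>) \<partial>cpop_space p mu n)
          = (\<integral>x. f (real (fst x)) (real (snd x)) \<partial>measure_pmf (Jstruct.J Mp \<pi>)))"
proof -
  define q1 where "q1 = measure mu {c. ennreal t \<le> fst c}"
  define q0 where "q0 = measure mu {c. ennreal t \<le> snd c}"
  have q1: "q1\<in>{0..1}" and q0: "q0\<in>{0..1}" unfolding q1_def q0_def using distr_gmap[OF mu sets p] by auto
  define \<rho> where "\<rho> = p*q1 + (1-p)*q0"
  define \<pi> where "\<pi> = p*q1 / \<rho>"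
  define \<pi>0 where "\<pi>0 = p*(1-q1) / (1-\<rho>)"
  note QQ = Qp_eq_Qr[OF p q1 q0, folded \<rho>_def, folded \<pi>_def \<pi>0_def]
  define I where "I = {..<n}"
  define e where "e = (\<lambda>i. ennreal t \<le> ennreal (T0 i))"
  define Y where "Y = Pi_pmf I (False,False) (\<lambda>_. Qp p q1 q0)"
  define Mp where "Mp = map_pmf (\<lambda>R. card {i\<in>I. e i \<and> R i}) (Pi_pmf I False (\<lambda>_. bernoulli_pmf \<rho>))"
  define G where "G = compose I (gmap t)"
  define M where "M = cpop_space p mu n"
  define PM where "PM = PiM I (\<lambda>_. count_space (UNIV :: (bool\<times>bool) set))"
  have I: "finite I" unfolding I_def by simp
  have JS: "Jstruct Mp \<pi>"
  proof
    have "set_pmf Mp \<subseteq> {..card I}" unfolding Mp_def by (auto intro!: card_mono I)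
    thus "finite (set_pmf Mp)" by (rule finite_subset) simp
    show "\<pi> \<in> {0..1}" by (rule QQ(2))
  qed
  have YJ: "map_pmf (HH I e) Y = Jstruct.J Mp \<pi>"
    unfolding Y_def QQ(4) Jstruct.J_def[OF JS] HH_def unfolding Mp_def
    by (rule pmf_decomp[OF I QQ(2)])
  have dist: "distr M PM G = distr (measure_pmf Y) PM (\<lambda>x. restrict x I)"
    and Gm: "G \<in> measurable M PM"
    unfolding M_def PM_def G_def I_def Y_def q1_def q0_def using cpop_distr[OF mu sets p] by auto
  have Nc: "Nc n T1 T0 t \<omega> = real (fst (HH I e (G \<omega>)))" "N1c n T1 T0 t \<omega> = real (snd (HH I e (G \<omega>)))" for \<omega>
    unfolding I_def e_def G_def using Nc_HH[OF H] by auto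
  have allm: "A \<in> sets PM" if "A \<subseteq> space PM" for A
    unfolding PM_def by (rule sets_PiM_cnt_all[OF I]) (use that in \<open>simp add: PM_def\<close>)
  have rm: "(\<lambda>x. restrict x I) \<in> measurable (measure_pmf Y) PM"
    by (simp add: measurable_cong_sets[OF sets_measure_pmf_count_space refl] PM_def space_PiM)
  have fm: "f \<in> borel_measurable PM" for f :: "_ \<Rightarrow> real"
    unfolding PM_def by (subst measurable_PiM_cnt_all[OF I]) simp
  have S: "{\<omega>\<in>space M. P (Nc n T1 T0 t \<omega>) (N1c n T1 T0 t \<omega>)} = G -` {x\<in>space PM. P (real (fst (HH I e x))) (real (snd (HH I e x)))} \<inter> space M" for P
    using measurable_space[OF Gm] by (auto simp: Nc)
  have sets_ok: "\<forall>P. {\<omega>\<in>space M. P (Nc n T1 T0 t \<omega>) (N1c n T1 T0 t \<omega>)} \<in> sets M"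
  proof
    fix P
    have "{x\<in>space PM. P (real (fst (HH I e x))) (real (snd (HH I e x)))} \<in> sets PM" by (rule allm) auto
    from measurable_sets[OF Gm this] show "{\<omega>\<in>space M. P (Nc n T1 T0 t \<omega>) (N1c n T1 T0 t \<omega>)} \<in> sets M"
      unfolding S .
  qed
  have meas_ok: "\<forall>P. measure M {\<omega>\<in>space M. P (Nc n T1 T0 t \<omega>) (N1c n T1 T0 t \<omega>)}
          = measure_pmf.prob (Jstruct.J Mp \<pi>) {x. P (real (fst x)) (real (snd x))}"
  proof
    fix P
    define A where "A = {x\<in>space PM. P (real (fst (HH I e x))) (real (snd (HH I e x)))}"
    have A: "A \<in> sets PM" unfolding A_def by (rule allm) auto
    have "measure M {\<omega>\<in>space M. P (Nc n T1 T0 t \<omega>) (N1c n T1 T0 t \<omega>)} = measure M (G -` A \<inter> space M)"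
      unfolding S A_def ..
    also have "\<dots> = measure (distr M PM G) A" by (rule measure_distr[OF Gm A, symmetric])
    also have "\<dots> = measure (distr (measure_pmf Y) PM (\<lambda>x. restrict x I)) A" by (simp add: dist)
    also have "\<dots> = measure (measure_pmf Y) ((\<lambda>x. restrict x I) -` A \<inter> space (measure_pmf Y))"
      by (rule measure_distr[OF rm A])
    also have "(\<lambda>x. restrict x I) -` A \<inter> space (measure_pmf Y) = HH I e -` {x. P (real (fst x)) (real (snd x))}"
      unfolding A_def by (auto simp: HH_restrict PM_def space_PiM)
    also have "measure (measure_pmf Y) \<dots> = measure_pmf.prob (Jstruct.J Mp \<pi>) {x. P (real (fst x)) (real (snd x))}"
      by (simp flip: YJ)
    finally show "measure M {\<omega>\<in>space M. P (Nc n T1 T0 t \<omega>) (N1c n T1 T0 t \<omega>)}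
          = measure_pmf.prob (Jstruct.J Mp \<pi>) {x. P (real (fst x)) (real (snd x))}" .
  qed
  have int_ok: "\<forall>f::real\<Rightarrow>real\<Rightarrow>real. (\<integral>\<omega>. f (Nc n T1 T0 t \<omega>) (N1c n T1 T0 t \<omega>) \<partial>M)
          = (\<integral>x. f (real (fst x)) (real (snd x)) \<partial>measure_pmf (Jstruct.J Mp \<pi>))"
  proof
    fix f :: "real \<Rightarrow> real \<Rightarrow> real"
    define h where "h = (\<lambda>x. f (real (fst (HH I e x))) (real (snd (HH I e x))))"
    have "(\<integral>\<omega>. f (Nc n T1 T0 t \<omega>) (N1c n T1 T0 t \<omega>) \<partial>M) = (\<integral>\<omega>. h (G \<omega>) \<partial>M)"
      unfolding h_def Nc ..
    also have "\<dots> = (\<integral>x. h x \<partial>distr M PM G)" by (rule integral_distr[OF Gm fm, symmetric])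
    also have "\<dots> = (\<integral>x. h x \<partial>distr (measure_pmf Y) PM (\<lambda>x. restrict x I))" by (simp add: dist)
    also have "\<dots> = (\<integral>y. h (restrict y I) \<partial>measure_pmf Y)" by (rule integral_distr[OF rm fm])
    also have "\<dots> = (\<integral>y. f (real (fst (HH I e y))) (real (snd (HH I e y))) \<partial>measure_pmf Y)"
      unfolding h_def HH_restrict ..
    also have "\<dots> = (\<integral>x. f (real (fst x)) (real (snd x)) \<partial>measure_pmf (Jstruct.J Mp \<pi>))"
      by (simp flip: YJ)
    finally show "(\<integral>\<omega>. f (Nc n T1 T0 t \<omega>) (N1c n T1 T0 t \<omega>) \<partial>M)
          = (\<integral>x. f (real (fst x)) (real (snd x)) \<partial>measure_pmf (Jstruct.J Mp \<pi>))" .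
  qed
  show ?thesis using JS sets_ok meas_ok int_ok unfolding M_def by blast
qed




lemma binom_tail:
  assumes pi: "\<pi> \<in> {0..1}" and L: "L \<ge> 0"
  shows "measure_pmf.prob (binomial_pmf m \<pi>) {k. \<bar>real k - \<pi> * real m\<bar> > sqrt (real m * L)} \<le> 2 * exp (-2 * L)"
proof (cases "m = 0")
  case True
  have "{k. \<bar>real k - \<pi> * real m\<bar> > sqrt (real m * L)} \<inter> set_pmf (binomial_pmf m \<pi>) = {}"
    using True pi by (auto simp: set_pmf_binomial_eq split: if_splits)
  hence "measure_pmf.prob (binomial_pmf m \<pi>) {k. \<bar>real k - \<pi> * real m\<bar> > sqrt (real m * L)} = 0"
    by (simp add: measure_pmf_zero_iff Int_commute)
  thus ?thesis by simp
next
  case False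
  interpret B: binomial_distribution m \<pi> by unfold_locales (rule pi)
  have "measure_pmf.prob (binomial_pmf m \<pi>) {k. \<bar>real k - \<pi> * real m\<bar> > sqrt (real m * L)}
      \<le> measure_pmf.prob (binomial_pmf m \<pi>) {k. \<bar>real k - real m * \<pi>\<bar> \<ge> sqrt (real m * L)}"
    by (intro measure_pmf.finite_measure_mono) (auto simp: mult.commute)
  also have "\<dots> \<le> 2 * exp (-2 * (sqrt (real m * L))\<^sup>2 / real m)"
    using B.prob_abs_ge[of "sqrt (real m * L)"] False L by simp
  also have "(sqrt (real m * L))\<^sup>2 = real m * L" using L by simp
  also have "-2 * (real m * L) / real m = -2 * L" using False by simp
  finally show ?thesis .
qed

lemma quad_dev:
  fixes x k m :: real
  assumes "0 \<le> x" "x \<le> m" "0 \<le> k" "k \<le> m"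
  shows "\<bar>x*(m-x) - k*(m-k)\<bar> \<le> m * \<bar>x - k\<bar>"
proof -
  have "x*(m-x) - k*(m-k) = (x-k)*(m-x-k)" by (simp add: algebra_simps)
  hence "\<bar>x*(m-x) - k*(m-k)\<bar> = \<bar>x-k\<bar> * \<bar>m-x-k\<bar>" by (simp add: abs_mult)
  also have "\<dots> \<le> \<bar>x-k\<bar> * m" using assms by (intro mult_left_mono) auto
  finally show ?thesis by (simp add: mult.commute)
qed

lemma binom_dev:
  fixes x L :: real and m :: nat
  assumes pi: "\<pi> \<in> {0..1}" and L: "L \<ge> 0" and x: "0 \<le> x" "x \<le> real m"
    and dev: "\<bar>x - \<pi> * real m\<bar> \<le> sqrt (real m * L)"
  shows "\<bar>x*(real m-x) - (\<integral>k. real k * (real m - real k) \<partial>measure_pmf (binomial_pmf m \<pi>))\<bar>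
     \<le> real m * (2 * sqrt (real m * L) + real m * (2 * exp (-2 * L)))"
proof -
  define B where "B = binomial_pmf m \<pi>"
  define s where "s = sqrt (real m * L)"
  define S where "S = {k. \<bar>real k - \<pi> * real m\<bar> > s}"
  have intg: "integrable (measure_pmf B) f" for f :: "nat \<Rightarrow> real" unfolding B_def using pi by simp
  have "x*(real m-x) - (\<integral>k. real k * (real m - real k) \<partial>measure_pmf B)
      = (\<integral>k. x*(real m-x) - real k * (real m - real k) \<partial>measure_pmf B)"
    by (subst Bochner_Integration.integral_diff) (auto simp: intg)
  hence "\<bar>x*(real m-x) - (\<integral>k. real k * (real m - real k) \<partial>measure_pmf B)\<bar>
      \<le> (\<integral>k. \<bar>x*(real m-x) - real k * (real m - real k)\<bar> \<partial>measure_pmf B)"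
    using integral_norm_bound[of "measure_pmf B" "\<lambda>k. x*(real m-x) - real k * (real m - real k)"] by simp
  also have "\<dots> \<le> (\<integral>k. real m * (2 * s + real m * indicator S k) \<partial>measure_pmf B)"
  proof (rule integral_mono_AE)
    show "integrable (measure_pmf B) (\<lambda>k. \<bar>x*(real m-x) - real k * (real m - real k)\<bar>)" by (rule intg)
    show "integrable (measure_pmf B) (\<lambda>k. real m * (2 * s + real m * indicator S k))" by (rule intg)
    show "AE k in measure_pmf B. \<bar>x*(real m-x) - real k * (real m - real k)\<bar> \<le> real m * (2 * s + real m * indicator S k)"
    proof (rule AE_pmfI)
      fix k assume "k \<in> set_pmf B"
      hence km: "k \<le> m" unfolding B_def using pi by (auto simp: set_pmf_binomial_eq split: if_splits)
      have "\<bar>x*(real m-x) - real k * (real m - real k)\<bar> \<le> real m * \<bar>x - real k\<bar>"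
        by (rule quad_dev) (use x km in auto)
      also have "\<bar>x - real k\<bar> \<le> 2 * s + real m * indicator S k"
      proof (cases "k \<in> S")
        case True
        have "\<bar>x - real k\<bar> \<le> real m" using x km by auto
        moreover have "0 \<le> s" unfolding s_def using L by simp
        ultimately show ?thesis using True by simp
      next
        case False
        hence "\<bar>real k - \<pi> * real m\<bar> \<le> s" unfolding S_def by simp
        thus ?thesis using dev False unfolding s_def by simp
      qed
      hence "real m * \<bar>x - real k\<bar> \<le> real m * (2 * s + real m * indicator S k)"
        by (intro mult_left_mono) auto
      finally show "\<bar>x*(real m-x) - real k * (real m - real k)\<bar> \<le> real m * (2 * s + real m * indicator S k)" .
    qed
  qed
  also have "\<dots> = real m * (2 * s + real m * measure_pmf.prob B S)"
    by (simp add: intg)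
  also have "\<dots> \<le> real m * (2 * s + real m * (2 * exp (-2 * L)))"
    using binom_tail[OF pi L, of m] unfolding B_def S_def s_def
    by (intro mult_left_mono add_left_mono) auto
  finally show ?thesis unfolding B_def s_def .
qed

lemma xi_bound:
  fixes D N1 G L :: real and m :: nat
  assumes D: "0 \<le> D" "D \<le> real m" and L: "0 \<le> L"
    and br: "2 \<le> m \<Longrightarrow> \<bar>N1*(real m-N1) - G\<bar> \<le> 4 * real m * sqrt (real m * L)"
  shows "\<bar>D * (real m - D) / ((real m)\<^sup>2 * (real m - 1)) * (N1*(real m-N1) - G)\<bar> \<le> 8 * D * sqrt L / sqrt (real m)"
proof (cases "m \<le> 1")
  case True
  hence "m = 0 \<or> m = 1" by auto
  thus ?thesis using D L by auto
next
  case False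
  hence m2: "2 \<le> m" by simp
  define N where "N = real m"
  have N2: "N \<ge> 2" unfolding N_def using m2 by simp
  have b: "\<bar>N1*(N-N1) - G\<bar> \<le> 4 * N * (sqrt N * sqrt L)" using br[OF m2] unfolding N_def by (simp add: real_sqrt_mult)
  have c0: "0 \<le> D * (N - D) / (N\<^sup>2 * (N - 1))" using D N2 unfolding N_def by auto
  have "\<bar>D * (N - D) / (N\<^sup>2 * (N - 1)) * (N1*(N-N1) - G)\<bar> = D * (N - D) / (N\<^sup>2 * (N - 1)) * \<bar>N1*(N-N1) - G\<bar>"
    by (simp only: abs_mult abs_of_nonneg[OF c0])
  also have "\<dots> \<le> D * (N - D) / (N\<^sup>2 * (N - 1)) * (4 * N * (sqrt N * sqrt L))"
    by (rule mult_left_mono[OF b c0])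
  also have "\<dots> \<le> D * N / (N\<^sup>2 * (N - 1)) * (4 * N * (sqrt N * sqrt L))"
    using D N2 L unfolding N_def
    by (intro mult_right_mono divide_right_mono mult_left_mono) auto
  also have "\<dots> = 4 * D * sqrt N * sqrt L / (N - 1)"
    using N2 by (simp add: power2_eq_square field_simps)
  also have "\<dots> \<le> 4 * D * sqrt N * sqrt L / (N / 2)"
    using N2 D L by (intro divide_left_mono mult_nonneg_nonneg) auto
  also have "\<dots> = 8 * D * sqrt L / sqrt N"
  proof -
    have "N = sqrt N * sqrt N" using N2 by simp
    hence "4 * D * sqrt N * sqrt L / (N / 2) = 4 * D * sqrt N * sqrt L / (sqrt N * sqrt N / 2)" by simp
    also have "\<dots> = 8 * D * sqrt L / sqrt N" using N2 by (simp add: field_simps)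
    finally show ?thesis .
  qed
  finally show ?thesis unfolding N_def .
qed

lemma sqrt_tele:
  fixes a b :: real
  assumes "0 \<le> b" "b \<le> a"
  shows "(a - b) / sqrt a \<le> 2 * (sqrt a - sqrt b)"
proof (cases "a = 0")
  case True thus ?thesis using assms by simp
next
  case False
  hence a: "a > 0" using assms by simp
  have sb: "sqrt b \<le> sqrt a" using assms by simp
  have "a - b = (sqrt a - sqrt b) * (sqrt a + sqrt b)" using assms by (simp add: algebra_simps)
  also have "\<dots> \<le> (sqrt a - sqrt b) * (2 * sqrt a)" using sb by (intro mult_left_mono) auto
  finally have "a - b \<le> 2 * (sqrt a - sqrt b) * sqrt a" by (simp add: algebra_simps)
  thus ?thesis using a by (simp add: divide_le_eq)
qed

lemma sum_tele:
  fixes a D :: "nat \<Rightarrow> real"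
  assumes h: "\<And>k. k < K \<Longrightarrow> 0 \<le> D k \<and> D k \<le> a k - a (Suc k) \<and> 0 \<le> a (Suc k)" and a0: "0 \<le> a 0"
  shows "(\<Sum>k<K. D k / sqrt (a k)) \<le> 2 * sqrt (a 0)"
proof -
  have "j \<le> K \<Longrightarrow> (\<Sum>k<j. D k / sqrt (a k)) \<le> 2 * (sqrt (a 0) - sqrt (a j))" for j
  proof (induction j)
    case 0 thus ?case by simp
  next
    case (Suc j)
    have hj: "0 \<le> D j" "D j \<le> a j - a (Suc j)" "0 \<le> a (Suc j)" using h[of j] Suc.prems by auto
    have aj: "0 \<le> a j" using hj by linarith
    have "D j / sqrt (a j) \<le> (a j - a (Suc j)) / sqrt (a j)" using hj by (intro divide_right_mono) auto
    also have "\<dots> \<le> 2 * (sqrt (a j) - sqrt (a (Suc j)))" using hj by (intro sqrt_tele) auto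
    finally show ?case using Suc by simp
  qed
  from this[of K] show ?thesis
    using h a0 by (cases K) (auto intro: order_trans)
qed




lemma N1c_le_Nc: "N1c n T1 T0 t \<omega> \<le> Nc n T1 T0 t \<omega>"
  unfolding N1c_def Nc_def by (auto intro!: card_mono)

lemma Nc_nat: "Nc n T1 T0 t \<omega> = real (nat \<lfloor>Nc n T1 T0 t \<omega>\<rfloor>)"
  unfolding Nc_def by simp

lemma good_t:
  fixes t :: real and T1 T0 :: "nat \<Rightarrow> real" and L :: real
  assumes mu: "prob_space mu" and sets: "sets mu = sets borel" and p: "p\<in>{0..1}"
    and H: "\<forall>i<n. T1 i = T0 i" and L: "L \<ge> 0"
  defines "M \<equiv> cpop_space p mu n"
  shows "\<exists>Bad. Bad \<in> sets M \<and> measure M Bad \<le> 2 * exp (-2 * L) \<and>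
    (\<forall>\<omega>\<in>space M - Bad.
      \<bar>N1c n T1 T0 t \<omega> * (Nc n T1 T0 t \<omega> - N1c n T1 T0 t \<omega>)
        - cond_exp_disc M (\<lambda>w. N1c n T1 T0 t w * (Nc n T1 T0 t w - N1c n T1 T0 t w)) (Nc n T1 T0 t) \<omega>\<bar>
      \<le> Nc n T1 T0 t \<omega> * (2 * sqrt (Nc n T1 T0 t \<omega> * L) + Nc n T1 T0 t \<omega> * (2 * exp (-2 * L))))"
proof -
  obtain Mp \<pi> where JS: "Jstruct Mp \<pi>"
    and sets_ok: "\<And>P. {\<omega>\<in>space M. P (Nc n T1 T0 t \<omega>) (N1c n T1 T0 t \<omega>)} \<in> sets M"
    and meas_ok: "\<And>P. measure M {\<omega>\<in>space M. P (Nc n T1 T0 t \<omega>) (N1c n T1 T0 t \<omega>)}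
          = measure_pmf.prob (Jstruct.J Mp \<pi>) {x. P (real (fst x)) (real (snd x))}"
    and int_ok: "\<And>f::real\<Rightarrow>real\<Rightarrow>real. (\<integral>\<omega>. f (Nc n T1 T0 t \<omega>) (N1c n T1 T0 t \<omega>) \<partial>M)
          = (\<integral>x. f (real (fst x)) (real (snd x)) \<partial>measure_pmf (Jstruct.J Mp \<pi>))"
    using key_t[OF mu sets p H, of t] unfolding M_def by blast
  interpret Jstruct Mp \<pi> by (rule JS)
  define N where "N = Nc n T1 T0 t"
  define N1 where "N1 = N1c n T1 T0 t"
  define B1 where "B1 = {\<omega>\<in>space M. pmf Mp (nat \<lfloor>N \<omega>\<rfloor>) = 0}"
  define B2 where "B2 = {\<omega>\<in>space M. \<bar>N1 \<omega> - \<pi> * N \<omega>\<bar> > sqrt (N \<omega> * L)}"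
  have B1s: "B1 \<in> sets M" unfolding B1_def N_def by (rule sets_ok)
  have B2s: "B2 \<in> sets M" unfolding B2_def N_def N1_def by (rule sets_ok)
  have mB1: "measure M B1 = 0"
    unfolding B1_def N_def using meas_ok[of "\<lambda>a b. pmf Mp (nat \<lfloor>a\<rfloor>) = 0"] J4 by simp
  have mB2: "measure M B2 \<le> 2 * exp (-2 * L)"
    unfolding B2_def N_def N1_def using meas_ok[of "\<lambda>a b. \<bar>b - \<pi> * a\<bar> > sqrt (a * L)"] J3[OF L] by simp
  have "measure M (B1 \<union> B2) \<le> measure M B1 + measure M B2"
    using B1s B2s by (intro measure_Un_le) (auto simp: M_def)
  hence mB: "measure M (B1 \<union> B2) \<le> 2 * exp (-2 * L)" using mB1 mB2 by simp
  have main: "\<bar>N1 \<omega> * (N \<omega> - N1 \<omega>) - cond_exp_disc M (\<lambda>w. N1 w * (N w - N1 w)) N \<omega>\<bar>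
      \<le> N \<omega> * (2 * sqrt (N \<omega> * L) + N \<omega> * (2 * exp (-2 * L)))" if \<omega>: "\<omega> \<in> space M - (B1 \<union> B2)" for \<omega>
  proof -
    define m where "m = nat \<lfloor>N \<omega>\<rfloor>"
    have Nm: "N \<omega> = real m" unfolding m_def N_def by (rule Nc_nat)
    have pm: "pmf Mp m \<noteq> 0" using \<omega> unfolding B1_def m_def by auto
    have dev: "\<bar>N1 \<omega> - \<pi> * real m\<bar> \<le> sqrt (real m * L)" using \<omega> Nm unfolding B2_def by auto
    have x: "0 \<le> N1 \<omega>" "N1 \<omega> \<le> real m" using N1c_le_Nc[of n T1 T0 t \<omega>] Nm unfolding N1_def N_def
      by (auto simp: N1c_def)
    have den: "measure M {y\<in>space M. N y = N \<omega>} = pmf Mp m"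
      using meas_ok[of "\<lambda>a b. a = real m"] J1[of m] Nm unfolding N_def by simp
    have num: "(\<integral>w. N1 w * (N w - N1 w) * indicator {y\<in>space M. N y = N \<omega>} w \<partial>M)
        = pmf Mp m * (\<integral>k. real k * (real m - real k) \<partial>measure_pmf (binomial_pmf m \<pi>))"
    proof -
      have "(\<integral>w. N1 w * (N w - N1 w) * indicator {y\<in>space M. N y = N \<omega>} w \<partial>M)
          = (\<integral>w. (\<lambda>a b. if a = real m then b * (a - b) else 0) (N w) (N1 w) \<partial>M)"
        by (intro Bochner_Integration.integral_cong) (auto simp: indicator_def Nm)
      also have "\<dots> = (\<integral>x. (if fst x = m then (\<lambda>k. real k * (real m - real k)) (snd x) else 0) \<partial>measure_pmf J)"
      proof -
        have "(\<integral>w. (\<lambda>a b. if a = real m then b * (a - b) else 0) (N w) (N1 w) \<partial>M)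
          = (\<integral>x. (\<lambda>a b. if a = real m then b * (a - b) else 0) (real (fst x)) (real (snd x)) \<partial>measure_pmf J)"
          unfolding N_def N1_def by (rule int_ok)
        also have "\<dots> = (\<integral>x. (if fst x = m then (\<lambda>k. real k * (real m - real k)) (snd x) else 0) \<partial>measure_pmf J)"
          by (intro Bochner_Integration.integral_cong) auto
        finally show ?thesis .
      qed
      also have "\<dots> = pmf Mp m * (\<integral>k. real k * (real m - real k) \<partial>measure_pmf (binomial_pmf m \<pi>))"
        by (rule J2)
      finally show ?thesis .
    qed
    have ce: "cond_exp_disc M (\<lambda>w. N1 w * (N w - N1 w)) N \<omega>
       = (\<integral>k. real k * (real m - real k) \<partial>measure_pmf (binomial_pmf m \<pi>))"
      unfolding cond_exp_disc_def num den using pm by simp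
    show ?thesis unfolding ce Nm using binom_dev[OF pi L x dev] by simp
  qed
  show ?thesis
    by (rule exI[of _ "B1 \<union> B2"]) (use B1s B2s mB main in \<open>auto simp: N_def N1_def\<close>)
qed




lemma ts_facts:
  assumes nonneg: "\<forall>i<n. 0 \<le> T i"
  shows "length (event_times T n) \<le> n"
    "\<And>k. k < length (event_times T n) \<Longrightarrow> 0 \<le> event_times T n ! k"
    "\<And>k. Suc k < length (event_times T n) \<Longrightarrow> event_times T n ! k < event_times T n ! Suc k"
proof -
  have len: "length (event_times T n) = card (T ` {..<n})" unfolding event_times_def by simp
  show "length (event_times T n) \<le> n" unfolding len using card_image_le[of "{..<n}" T] by simp
  fix k
  show "k < length (event_times T n) \<Longrightarrow> 0 \<le> event_times T n ! k"
  proof -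
    assume k: "k < length (event_times T n)"
    have "event_times T n ! k \<in> set (event_times T n)" using k by (rule nth_mem)
    also have "set (event_times T n) = T ` {..<n}" unfolding event_times_def by simp
    finally show ?thesis using nonneg by auto
  qed
  show "Suc k < length (event_times T n) \<Longrightarrow> event_times T n ! k < event_times T n ! Suc k"
    unfolding event_times_def
    by (rule sorted_wrt_nth_less[OF strict_sorted_list_of_set]) auto
qed

lemma count_facts:
  fixes t t' :: real
  assumes t: "0 \<le> t" "t < t'"
  shows "Dc n T1 T0 t \<omega> + Nc n T1 T0 t' \<omega> \<le> Nc n T1 T0 t \<omega>"
proof -
  define A where "A = {i\<in>{..<n}. Deltar T1 T0 \<omega> i \<and> Wr T1 T0 \<omega> i = ennreal t}"
  define B where "B = {i\<in>{..<n}. ennreal t' \<le> Wr T1 T0 \<omega> i}"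
  define C where "C = {i\<in>{..<n}. ennreal t \<le> Wr T1 T0 \<omega> i}"
  have "A \<inter> B = {}" using t unfolding A_def B_def by (auto simp: ennreal_le_iff)
  moreover have tt: "ennreal t \<le> ennreal t'" using t by (intro ennreal_leI) simp
  moreover have "A \<union> B \<subseteq> C" unfolding A_def B_def C_def using tt
    by (auto dest: order_trans)
  moreover have "finite A" "finite B" "finite C" unfolding A_def B_def C_def by auto
  ultimately have "card A + card B \<le> card C"
    using card_Un_disjoint[of A B] card_mono[of C "A \<union> B"] by simp
  thus ?thesis unfolding Dc_def Nc_def A_def B_def C_def by linarith
qed

lemma Dc_le_Nc: "Dc n T1 T0 t \<omega> \<le> Nc n T1 T0 t \<omega>"
  unfolding Dc_def Nc_def by (auto intro!: card_mono)

lemma Nc_le_n: "Nc n T1 T0 t \<omega> \<le> real n"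
  unfolding Nc_def using card_mono[of "{..<n}" "{i\<in>{..<n}. ennreal t \<le> Wr T1 T0 \<omega> i}"] by auto

lemma exp_ln_sq: "(x::real) > 0 \<Longrightarrow> exp (-2 * ln x) = 1 / x^2"
proof -
  assume x: "x > 0"
  have "-2 * ln x = - ln (x^2)" using x by (simp add: ln_realpow)
  hence "exp (-2 * ln x) = inverse (exp (ln (x^2)))" by (simp add: exp_minus)
  thus ?thesis using x by (simp add: divide_inverse)
qed




lemma main_n:
  fixes mu :: "(ennreal \<times> ennreal) measure" and T1 T0 :: "nat \<Rightarrow> real" and n :: nat
  assumes mu: "prob_space mu" and sets: "sets mu = sets borel" and p: "p\<in>{0..1}"
    and nonneg: "\<forall>i<n. 0 \<le> T0 i" and H: "\<forall>i<n. T1 i = T0 i" and n3: "3 \<le> n"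
  shows "measure (cpop_space p mu n)
     {\<omega>\<in>space (cpop_space p mu n).
        \<bar>\<Sum>k < length (event_times T0 n) - 1. xi1 p mu n T1 T0 (event_times T0 n ! k) \<omega>\<bar>
          > 16 * sqrt (real n * ln (real n))} \<le> 2 / real n"
proof -
  define M where "M = cpop_space p mu n"
  define ts where "ts = event_times T0 n"
  define K where "K = length ts"
  define L where "L = ln (real n)"
  define E where "E = 2 * exp (-2 * L)"
  have npos: "real n > 0" using n3 by simp
  have L1: "1 \<le> L" unfolding L_def using n3 exp_le by (subst ln_ge_iff) auto
  have L0: "0 \<le> L" using L1 by simp
  have E: "E = 2 / (real n)^2" unfolding E_def L_def using exp_ln_sq[OF npos] by simp
  have KN: "K \<le> n" unfolding K_def ts_def by (rule ts_facts(1)[OF nonneg])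
  have ts0: "k < K \<Longrightarrow> 0 \<le> ts ! k" for k unfolding K_def ts_def by (rule ts_facts(2)[OF nonneg])
  have tsl: "Suc k < K \<Longrightarrow> ts ! k < ts ! Suc k" for k unfolding K_def ts_def by (rule ts_facts(3)[OF nonneg])
  define br where "br = (\<lambda>t \<omega>. N1c n T1 T0 t \<omega> * (Nc n T1 T0 t \<omega> - N1c n T1 T0 t \<omega>)
        - cond_exp_disc M (\<lambda>w. N1c n T1 T0 t w * (Nc n T1 T0 t w - N1c n T1 T0 t w)) (Nc n T1 T0 t) \<omega>)"
  have "\<forall>k. \<exists>B. B \<in> sets M \<and> measure M B \<le> E \<and>
    (\<forall>\<omega>\<in>space M - B. \<bar>br (ts!k) \<omega>\<bar>
      \<le> Nc n T1 T0 (ts!k) \<omega> * (2 * sqrt (Nc n T1 T0 (ts!k) \<omega> * L) + Nc n T1 T0 (ts!k) \<omega> * E))"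
    unfolding br_def M_def E_def using good_t[OF mu sets p H L0] by blast
  then obtain Bad where Bad: "\<And>k. Bad k \<in> sets M" "\<And>k. measure M (Bad k) \<le> E"
    "\<And>k \<omega>. \<omega> \<in> space M - Bad k \<Longrightarrow> \<bar>br (ts!k) \<omega>\<bar>
      \<le> Nc n T1 T0 (ts!k) \<omega> * (2 * sqrt (Nc n T1 T0 (ts!k) \<omega> * L) + Nc n T1 T0 (ts!k) \<omega> * E)"
    by metis
  define U where "U = (\<Union>k\<in>{..<K-1}. Bad k)"
  interpret P: prob_space M unfolding M_def cpop_space_def
    by (intro prob_space_PiM prob_space_pair measure_pmf.prob_space_axioms mu)
  have Us: "U \<in> sets M" unfolding U_def using Bad(1) by auto
  have "measure M U \<le> (\<Sum>k<K-1. measure M (Bad k))"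
    unfolding U_def by (rule P.finite_measure_subadditive_finite) (auto simp: Bad(1))
  also have "\<dots> \<le> (\<Sum>k<K-1. E)" by (intro sum_mono Bad(2))
  also have "\<dots> = real (K-1) * E" by simp
  also have "\<dots> \<le> real n * (2 / (real n)^2)" unfolding E using KN
    by (intro mult_right_mono) auto
  also have "\<dots> = 2 / real n" using npos by (simp add: power2_eq_square)
  finally have mU: "measure M U \<le> 2 / real n" .
  define S where "S = {\<omega>\<in>space M. \<bar>\<Sum>k < K - 1. xi1 p mu n T1 T0 (ts ! k) \<omega>\<bar> > 16 * sqrt (real n * L)}"
  have det: "\<bar>\<Sum>k < K - 1. xi1 p mu n T1 T0 (ts ! k) \<omega>\<bar> \<le> 16 * sqrt (real n * L)" if \<omega>: "\<omega> \<in> space M - U" for \<omega>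
  proof -
    define a where "a = (\<lambda>k. Nc n T1 T0 (ts!k) \<omega>)"
    define D where "D = (\<lambda>k. Dc n T1 T0 (ts!k) \<omega>)"
    have xk: "\<bar>xi1 p mu n T1 T0 (ts ! k) \<omega>\<bar> \<le> 8 * sqrt L * (D k / sqrt (a k))" if k: "k < K - 1" for k
    proof -
      define t where "t = ts ! k"
      define m where "m = nat \<lfloor>Nc n T1 T0 t \<omega>\<rfloor>"
      have Nm: "Nc n T1 T0 t \<omega> = real m" unfolding m_def by (rule Nc_nat)
      have wB: "\<omega> \<in> space M - Bad k" using \<omega> k unfolding U_def by auto
      have b: "\<bar>br t \<omega>\<bar> \<le> real m * (2 * sqrt (real m * L) + real m * E)"
        using Bad(3)[OF wB] Nm unfolding t_def by simp
      have Dle: "0 \<le> Dc n T1 T0 t \<omega>" "Dc n T1 T0 t \<omega> \<le> real m"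
        using Dc_le_Nc[of n T1 T0 t \<omega>] Nm by (auto simp: Dc_def)
      have "\<bar>Dc n T1 T0 t \<omega> * (real m - Dc n T1 T0 t \<omega>) / ((real m)\<^sup>2 * (real m - 1)) * br t \<omega>\<bar>
          \<le> 8 * Dc n T1 T0 t \<omega> * sqrt L / sqrt (real m)"
        unfolding br_def Nm
      proof (rule xi_bound[OF Dle L0])
        assume m2: "2 \<le> m"
        have mn: "real m \<le> real n" using Nc_le_n[of n T1 T0 t \<omega>] Nm by simp
        have "real m * E = 2 * real m / (real n)^2" unfolding E by simp
        also have "\<dots> \<le> 2 * real n / (real n)^2" using mn by (intro divide_right_mono) auto
        also have "\<dots> = 2 / real n" using npos by (simp add: power2_eq_square)
        also have "\<dots> \<le> 1" using n3 by simp
        also have "1 \<le> sqrt (real m * L)"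
        proof -
          have "1 * 1 \<le> real m * L" by (rule mult_mono) (use m2 L1 in auto)
          thus ?thesis by simp
        qed
        finally have "real m * E \<le> sqrt (real m * L)" .
        moreover have "0 \<le> sqrt (real m * L)" using L0 by simp
        ultimately have "real m * E \<le> 2 * sqrt (real m * L)" by linarith
        hence "real m * (2 * sqrt (real m * L) + real m * E) \<le> real m * (4 * sqrt (real m * L))"
          by (intro mult_left_mono) auto
        thus "\<bar>N1c n T1 T0 t \<omega> * (real m - N1c n T1 T0 t \<omega>) -
          cond_exp_disc M (\<lambda>w. N1c n T1 T0 t w * (Nc n T1 T0 t w - N1c n T1 T0 t w)) (Nc n T1 T0 t) \<omega>\<bar>
          \<le> 4 * real m * sqrt (real m * L)"
          using b unfolding br_def Nm by simp
      qed
      moreover have "xi1 p mu n T1 T0 t \<omega> = Dc n T1 T0 t \<omega> * (real m - Dc n T1 T0 t \<omega>) / ((real m)\<^sup>2 * (real m - 1)) * br t \<omega>"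
        unfolding xi1_def Let_def br_def M_def Nm ..
      ultimately show ?thesis unfolding t_def D_def a_def Nm[unfolded t_def] by (simp add: mult.commute mult.left_commute)
    qed
    have "\<bar>\<Sum>k < K - 1. xi1 p mu n T1 T0 (ts ! k) \<omega>\<bar> \<le> (\<Sum>k < K - 1. \<bar>xi1 p mu n T1 T0 (ts ! k) \<omega>\<bar>)"
      by (rule sum_abs)
    also have "\<dots> \<le> (\<Sum>k < K - 1. 8 * sqrt L * (D k / sqrt (a k)))"
      by (intro sum_mono xk) auto
    also have "\<dots> = 8 * sqrt L * (\<Sum>k < K - 1. D k / sqrt (a k))"
      by (simp add: sum_distrib_left)
    also have "(\<Sum>k < K - 1. D k / sqrt (a k)) \<le> 2 * sqrt (a 0)"
    proof (rule sum_tele)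
      fix k assume k: "k < K - 1"
      have "D k + a (Suc k) \<le> a k" unfolding D_def a_def
        by (rule count_facts) (use k ts0 tsl in auto)
      thus "0 \<le> D k \<and> D k \<le> a k - a (Suc k) \<and> 0 \<le> a (Suc k)"
        unfolding D_def a_def by (auto simp: Dc_def Nc_def)
    qed (auto simp: a_def Nc_def)
    also have "sqrt (a 0) \<le> sqrt (real n)" unfolding a_def using Nc_le_n by simp
    finally have "\<bar>\<Sum>k < K - 1. xi1 p mu n T1 T0 (ts ! k) \<omega>\<bar> \<le> 8 * sqrt L * (2 * sqrt (real n))"
      using L0 by (simp add: mult_left_mono)
    also have "\<dots> = 16 * sqrt (real n * L)" by (simp add: real_sqrt_mult)
    finally show ?thesis .
  qed
  have SU: "S \<subseteq> U" unfolding S_def using det by force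
  have "measure M S \<le> 2 / real n"
  proof (cases "S \<in> sets M")
    case True
    have "measure M S \<le> measure M U" by (rule P.finite_measure_mono[OF SU Us])
    thus ?thesis using mU by simp
  next
    case False
    thus ?thesis using npos by (simp add: measure_notin_sets)
  qed
  thus ?thesis unfolding S_def M_def K_def ts_def L_def .
qed


theorem lemmaA8:
  fixes p :: real
    and mu :: "nat \<Rightarrow> (ennreal \<times> ennreal) measure"
    and T1 T0 :: "nat \<Rightarrow> nat \<Rightarrow> real"
  assumes "0 < p" and "p < 1"
    and "\<forall>n. prob_space (mu n)"
    and "\<forall>n. sets (mu n) = sets borel"
    and "\<forall>n i. i < n \<longrightarrow> 0 \<le> T1 n i \<and> 0 \<le> T0 n i"
    and H0: "\<forall>n i. i < n \<longrightarrow> T1 n i = T0 n i"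
  shows "\<forall>\<epsilon>>0. \<exists>B. \<forall>\<^sub>F n in sequentially.
           measure (cpop_space p (mu n) n)
             {\<omega> \<in> space (cpop_space p (mu n) n).
                \<bar>\<Sum>k < length (event_times (T0 n) n) - 1.
                    xi1 p (mu n) n (T1 n) (T0 n) (event_times (T0 n) n ! k) \<omega>\<bar>
                > B * sqrt (real n * ln (real n))} \<le> \<epsilon>"
proof (intro allI impI)
  fix \<epsilon> :: real assume \<epsilon>: "\<epsilon> > 0"
  define N0 where "N0 = max 3 (nat \<lceil>2 / \<epsilon>\<rceil>)"
  have "\<forall>\<^sub>F n in sequentially.
           measure (cpop_space p (mu n) n)
             {\<omega> \<in> space (cpop_space p (mu n) n).
                \<bar>\<Sum>k < length (event_times (T0 n) n) - 1.
                    xi1 p (mu n) n (T1 n) (T0 n) (event_times (T0 n) n ! k) \<omega>\<bar>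
                > 16 * sqrt (real n * ln (real n))} \<le> \<epsilon>"
  proof (rule eventually_sequentiallyI[of N0])
    fix n assume n: "N0 \<le> n"
    have n3: "3 \<le> n" using n unfolding N0_def by simp
    have "2 / \<epsilon> \<le> real n"
    proof -
      have "2 / \<epsilon> \<le> real (nat \<lceil>2 / \<epsilon>\<rceil>)" by linarith
      also have "\<dots> \<le> real n" using n unfolding N0_def by simp
      finally show ?thesis .
    qed
    hence e2: "2 / real n \<le> \<epsilon>" using \<epsilon> n3 by (simp add: field_simps)
    have "measure (cpop_space p (mu n) n)
             {\<omega> \<in> space (cpop_space p (mu n) n).
                \<bar>\<Sum>k < length (event_times (T0 n) n) - 1.
                    xi1 p (mu n) n (T1 n) (T0 n) (event_times (T0 n) n ! k) \<omega>\<bar>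
                > 16 * sqrt (real n * ln (real n))} \<le> 2 / real n"
      by (rule main_n) (use assms n3 in auto)
    thus "measure (cpop_space p (mu n) n)
             {\<omega> \<in> space (cpop_space p (mu n) n).
                \<bar>\<Sum>k < length (event_times (T0 n) n) - 1.
                    xi1 p (mu n) n (T1 n) (T0 n) (event_times (T0 n) n ! k) \<omega>\<bar>
                > 16 * sqrt (real n * ln (real n))} \<le> \<epsilon>" using e2 by linarith
  qed
  thus "\<exists>B. \<forall>\<^sub>F n in sequentially.
           measure (cpop_space p (mu n) n)
             {\<omega> \<in> space (cpop_space p (mu n) n).
                \<bar>\<Sum>k < length (event_times (T0 n) n) - 1.
                    xi1 p (mu n) n (T1 n) (T0 n) (event_times (T0 n) n ! k) \<omega>\<bar>
                > B * sqrt (real n * ln (real n))} \<le> \<epsilon>" by blast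
qed

end
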